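(* For any RES-graph $(G,\gamma,b)$, the maximum number of non-zero circuits in a flooding of $(G,\gamma,b)$ equals $\tilde{\nu}(G,\gamma,b)$.
   Context: Graphs are finite and may have loops and multiple edges. Each edge consists of two half-edges; each half-edge is incident to a vertex, and a loop contributes $2$ to the degree of its vertex. An arc is an ordered pair $(h_1,h_2)$ of half-edges forming an edge; its tail is the vertex of $h_1$ and its head is the vertex of $h_2$. A trail is a sequence of arcs whose edges are pairwise distinct and such that the head of each arc (other than the last) is the tail of the next. Its tail and head are the tail of its first arc and the head of its last arc. A circuit is a trail whose head equals its tail. A circuit hits $v$ if it contains an arc incident to $v$. A circuit-decomposition of $G$ is a collection of circuits using every edge of $G$ exactly once. A graph is Eulerian if it is connected and every vertex has even degree. A signature is a function $\gamma:E(G)\to\mathbb{Z}_2$. The weight of a trail is the $\mathbb{Z}_2$-sum of $\gamma$ over its edges, and a trail is zero or non-zero accordingly. An RES-graph is a triple $(G,\gamma,b)$ where $G$ is an Eulerian graph, $\gamma$ is a signature of $G$, and $b\in V(G)$. The flooding number $\tilde{\nu}(G,\gamma,b)$ is the maximum size of a circuit-decomposition in which every circuit is non-zero and hits $b$; it is $0$ if none exists. A flooding of $(G,\gamma,b)$ is a circuit-decomposition of $G$ of size $\deg(b)/2$ in which every circuit has $b$ as its tail and its head. *)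

theory Defs
  imports Main "HOL-Library.Z2"
begin

(* A graph is given by a vertex set V, an edge set E and, for every edge e,
   its two half-edges (e,True) and (e,False); the half-edge (e,i) is incident
   to the vertex endp e i.  Loops (endp e True = endp e False) and multiple
   edges are allowed. *)

definition graph :: "'v set \<Rightarrow> 'e set \<Rightarrow> ('e \<Rightarrow> bool \<Rightarrow> 'v) \<Rightarrow> bool" where
  "graph V E endp \<longleftrightarrow> finite V \<and> finite E \<and> (\<forall>e\<in>E. \<forall>i. endp e i \<in> V)"

(* degree = number of half-edges incident to v; a loop contributes 2 *)
definition deg :: "'e set \<Rightarrow> ('e \<Rightarrow> bool \<Rightarrow> 'v) \<Rightarrow> 'v \<Rightarrow> nat" where
  "deg E endp v = card {h. fst h \<in> E \<and> endp (fst h) (snd h) = v}"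

definition connected_graph :: "'v set \<Rightarrow> 'e set \<Rightarrow> ('e \<Rightarrow> bool \<Rightarrow> 'v) \<Rightarrow> bool" where
  "connected_graph V E endp \<longleftrightarrow> V \<noteq> {} \<and>
     (\<forall>u\<in>V. \<forall>v\<in>V.
        (u, v) \<in> ({(endp e True, endp e False) | e. e \<in> E}
                   \<union> {(endp e False, endp e True) | e. e \<in> E})\<^sup>*)"

definition eulerian :: "'v set \<Rightarrow> 'e set \<Rightarrow> ('e \<Rightarrow> bool \<Rightarrow> 'v) \<Rightarrow> bool" where
  "eulerian V E endp \<longleftrightarrow> graph V E endp \<and> connected_graph V E endp
     \<and> (\<forall>v\<in>V. even (deg E endp v))"

(* An arc is an ordered pair of half-edges ((e,i),(e,\<not>i)) forming the edge e;
   we represent it by (e,i).  Its tail is the vertex of (e,i), its head the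
   vertex of (e,\<not>i). *)
type_synonym 'e arc = "'e \<times> bool"

definition arc_tail :: "('e \<Rightarrow> bool \<Rightarrow> 'v) \<Rightarrow> 'e arc \<Rightarrow> 'v" where
  "arc_tail endp a = endp (fst a) (snd a)"

definition arc_head :: "('e \<Rightarrow> bool \<Rightarrow> 'v) \<Rightarrow> 'e arc \<Rightarrow> 'v" where
  "arc_head endp a = endp (fst a) (\<not> snd a)"

definition trail :: "'e set \<Rightarrow> ('e \<Rightarrow> bool \<Rightarrow> 'v) \<Rightarrow> 'e arc list \<Rightarrow> bool" where
  "trail E endp t \<longleftrightarrow> t \<noteq> [] \<and> set (map fst t) \<subseteq> E \<and> distinct (map fst t) \<and>
     (\<forall>k. Suc k < length t \<longrightarrow> arc_head endp (t ! k) = arc_tail endp (t ! Suc k))"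

definition trail_tail :: "('e \<Rightarrow> bool \<Rightarrow> 'v) \<Rightarrow> 'e arc list \<Rightarrow> 'v" where
  "trail_tail endp t = arc_tail endp (hd t)"

definition trail_head :: "('e \<Rightarrow> bool \<Rightarrow> 'v) \<Rightarrow> 'e arc list \<Rightarrow> 'v" where
  "trail_head endp t = arc_head endp (last t)"

definition circuit :: "'e set \<Rightarrow> ('e \<Rightarrow> bool \<Rightarrow> 'v) \<Rightarrow> 'e arc list \<Rightarrow> bool" where
  "circuit E endp c \<longleftrightarrow> trail E endp c \<and> trail_head endp c = trail_tail endp c"

definition hits :: "('e \<Rightarrow> bool \<Rightarrow> 'v) \<Rightarrow> 'e arc list \<Rightarrow> 'v \<Rightarrow> bool" where
  "hits endp c v \<longleftrightarrow> (\<exists>a\<in>set c. arc_tail endp a = v \<or> arc_head endp a = v)"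

definition circuit_decomposition ::
  "'e set \<Rightarrow> ('e \<Rightarrow> bool \<Rightarrow> 'v) \<Rightarrow> 'e arc list list \<Rightarrow> bool" where
  "circuit_decomposition E endp D \<longleftrightarrow>
     (\<forall>c\<in>set D. circuit E endp c) \<and>
     distinct (concat (map (map fst) D)) \<and> set (concat (map (map fst) D)) = E"

definition weight :: "('e \<Rightarrow> bit) \<Rightarrow> 'e arc list \<Rightarrow> bit" where
  "weight \<gamma> t = sum_list (map (\<lambda>a. \<gamma> (fst a)) t)"

definition nonzero :: "('e \<Rightarrow> bit) \<Rightarrow> 'e arc list \<Rightarrow> bool" where
  "nonzero \<gamma> t \<longleftrightarrow> weight \<gamma> t \<noteq> 0"

definition res_graph ::
  "'v set \<Rightarrow> 'e set \<Rightarrow> ('e \<Rightarrow> bool \<Rightarrow> 'v) \<Rightarrow> ('e \<Rightarrow> bit) \<Rightarrow> 'v \<Rightarrow> bool" where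
  "res_graph V E endp \<gamma> b \<longleftrightarrow> eulerian V E endp \<and> b \<in> V"

definition good_decomposition ::
  "'e set \<Rightarrow> ('e \<Rightarrow> bool \<Rightarrow> 'v) \<Rightarrow> ('e \<Rightarrow> bit) \<Rightarrow> 'v \<Rightarrow> 'e arc list list \<Rightarrow> bool" where
  "good_decomposition E endp \<gamma> b D \<longleftrightarrow> circuit_decomposition E endp D \<and>
     (\<forall>c\<in>set D. nonzero \<gamma> c \<and> hits endp c b)"

definition flooding_number ::
  "'e set \<Rightarrow> ('e \<Rightarrow> bool \<Rightarrow> 'v) \<Rightarrow> ('e \<Rightarrow> bit) \<Rightarrow> 'v \<Rightarrow> nat" where
  "flooding_number E endp \<gamma> b =
     (if \<exists>D. good_decomposition E endp \<gamma> b D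
      then Max {length D | D. good_decomposition E endp \<gamma> b D} else 0)"

definition flooding :: "'e set \<Rightarrow> ('e \<Rightarrow> bool \<Rightarrow> 'v) \<Rightarrow> 'v \<Rightarrow> 'e arc list list \<Rightarrow> bool" where
  "flooding E endp b F \<longleftrightarrow> circuit_decomposition E endp F \<and>
     length F = deg E endp b div 2 \<and>
     (\<forall>c\<in>set F. trail_tail endp c = b \<and> trail_head endp c = b)"

definition num_nonzero :: "('e \<Rightarrow> bit) \<Rightarrow> 'e arc list list \<Rightarrow> nat" where
  "num_nonzero \<gamma> F = length (filter (nonzero \<gamma>) F)"

end

theory Submission
  imports Defs "HOL-Library.Multiset"
begin


fun adjl :: "('e \<Rightarrow> bool \<Rightarrow> 'v) \<Rightarrow> 'e arc list \<Rightarrow> bool" where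
  "adjl endp (a # c # t) = (arc_head endp a = arc_tail endp c \<and> adjl endp (c # t))"
| "adjl endp _ = True"

lemma adjl_iff:
  "(\<forall>k. Suc k < length t \<longrightarrow> arc_head endp (t!k) = arc_tail endp (t!Suc k)) \<longleftrightarrow> adjl endp t"
proof (induction endp t rule: adjl.induct)
  case (1 endp a c t)
  show ?case
  proof
    assume H: "\<forall>k. Suc k < length (a # c # t) \<longrightarrow> arc_head endp ((a # c # t) ! k) = arc_tail endp ((a # c # t) ! Suc k)"
    have "arc_head endp a = arc_tail endp c" using H[rule_format, of 0] by simp
    moreover have "\<forall>k. Suc k < length (c # t) \<longrightarrow> arc_head endp ((c # t) ! k) = arc_tail endp ((c # t) ! Suc k)"
      using H by (metis Suc_less_eq length_Cons nth_Cons_Suc)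
    ultimately show "adjl endp (a # c # t)" using 1 by simp
  next
    assume "adjl endp (a # c # t)"
    then have A: "arc_head endp a = arc_tail endp c" and B: "\<forall>k. Suc k < length (c # t) \<longrightarrow> arc_head endp ((c # t) ! k) = arc_tail endp ((c # t) ! Suc k)"
      using 1 by auto
    show "\<forall>k. Suc k < length (a # c # t) \<longrightarrow> arc_head endp ((a # c # t) ! k) = arc_tail endp ((a # c # t) ! Suc k)"
    proof (intro allI impI)
      fix k assume "Suc k < length (a # c # t)"
      then show "arc_head endp ((a # c # t) ! k) = arc_tail endp ((a # c # t) ! Suc k)"
        using A B by (cases k) auto
    qed
  qed
qed auto

lemma trail_alt: "trail E endp t \<longleftrightarrow> t \<noteq> [] \<and> set (map fst t) \<subseteq> E \<and> distinct (map fst t) \<and> adjl endp t"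
  unfolding trail_def adjl_iff ..

lemma adjl_append:
  "xs \<noteq> [] \<Longrightarrow> ys \<noteq> [] \<Longrightarrow> adjl endp (xs @ ys) \<longleftrightarrow>
     adjl endp xs \<and> adjl endp ys \<and> arc_head endp (last xs) = arc_tail endp (hd ys)"
proof (induction xs)
  case Nil then show ?case by simp
next
  case (Cons a xs)
  show ?case
  proof (cases xs)
    case Nil
    then show ?thesis using Cons by (cases ys) auto
  next
    case (Cons c t)
    then show ?thesis using Cons.IH Cons.prems by auto
  qed
qed

definition tc :: "('e \<Rightarrow> bool \<Rightarrow> 'v) \<Rightarrow> 'v \<Rightarrow> 'e arc list \<Rightarrow> nat" where
  "tc endp v t = sum_list (map (\<lambda>a. if arc_tail endp a = v then 1 else 0) t)"
definition hc :: "('e \<Rightarrow> bool \<Rightarrow> 'v) \<Rightarrow> 'v \<Rightarrow> 'e arc list \<Rightarrow> nat" where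
  "hc endp v t = sum_list (map (\<lambda>a. if arc_head endp a = v then 1 else 0) t)"
definition ev :: "('e \<Rightarrow> bool \<Rightarrow> 'v) \<Rightarrow> 'v \<Rightarrow> 'e \<Rightarrow> nat" where
  "ev endp v e = (if endp e True = v then 1 else 0) + (if endp e False = v then 1 else 0)"

lemma tc_append[simp]: "tc endp v (xs @ ys) = tc endp v xs + tc endp v ys"
  by (simp add: tc_def)
lemma hc_append[simp]: "hc endp v (xs @ ys) = hc endp v xs + hc endp v ys"
  by (simp add: hc_def)
lemma tc_Cons[simp]: "tc endp v (a # ys) = (if arc_tail endp a = v then 1 else 0) + tc endp v ys"
  by (simp add: tc_def)
lemma hc_Cons[simp]: "hc endp v (a # ys) = (if arc_head endp a = v then 1 else 0) + hc endp v ys"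
  by (simp add: hc_def)
lemma tc_Nil[simp]: "tc endp v [] = 0" by (simp add: tc_def)
lemma hc_Nil[simp]: "hc endp v [] = 0" by (simp add: hc_def)

lemma tc_hc:
  "adjl endp t \<Longrightarrow> t \<noteq> [] \<Longrightarrow>
   tc endp v t + (if arc_head endp (last t) = v then 1 else 0) = hc endp v t + (if arc_tail endp (hd t) = v then 1 else 0)"
  by (induction endp t rule: adjl.induct) auto

lemma tc_plus_hc: "distinct (map fst t) \<Longrightarrow> tc endp v t + hc endp v t = (\<Sum>e\<in>set (map fst t). ev endp v e)"
proof (induction t)
  case (Cons a t)
  have "fst a \<notin> set (map fst t)" using Cons.prems by simp
  then show ?case using Cons by (cases a; cases "snd a") (auto simp: ev_def arc_tail_def arc_head_def)
qed simp

lemma deg_sum: "finite E \<Longrightarrow> deg E endp v = (\<Sum>e\<in>E. ev endp v e)"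
proof -
  assume f: "finite E"
  have "{h. fst h \<in> E \<and> endp (fst h) (snd h) = v} = Sigma E (\<lambda>e. {i. endp e i = v})" by auto
  moreover have "card (Sigma E (\<lambda>e. {i. endp e i = v})) = (\<Sum>e\<in>E. card {i. endp e i = v})"
    using f by (intro card_SigmaI) auto
  moreover have "card {i. endp e i = v} = ev endp v e" for e
  proof -
    have "{i. endp e i = v} = (if endp e True = v then {True} else {}) \<union> (if endp e False = v then {False} else {})"
      by (auto; case_tac x; auto)
    then show ?thesis by (simp add: ev_def)
  qed
  ultimately show ?thesis by (simp add: deg_def)
qed

lemma trail_mono: "trail E endp t \<Longrightarrow> E \<subseteq> E' \<Longrightarrow> trail E' endp t"
  by (auto simp: trail_def)
lemma circuit_mono: "circuit E endp t \<Longrightarrow> E \<subseteq> E' \<Longrightarrow> circuit E' endp t"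
  by (auto simp: circuit_def intro: trail_mono)

lemma cd_alt: "circuit_decomposition E endp D \<longleftrightarrow>
  (\<forall>c\<in>set D. circuit E endp c) \<and> distinct (map fst (concat D)) \<and> set (map fst (concat D)) = E"
  by (simp add: circuit_decomposition_def map_concat)



lemma trail_length_le: "trail E endp t \<Longrightarrow> finite E \<Longrightarrow> length t \<le> card E"
proof -
  assume t: "trail E endp t" and f: "finite E"
  have "length t = card (set (map fst t))" using t by (metis distinct_card length_map trail_def)
  also have "\<dots> \<le> card E" using t f by (intro card_mono) (auto simp: trail_def)
  finally show ?thesis .
qed

lemma exists_circuit:
  assumes f: "finite E" and ne: "E \<noteq> {}" and ev: "\<forall>v. even (deg E endp v)"
  shows "\<exists>c. circuit E endp c"
proof -
  let ?L = "{length t | t. trail E endp t}"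
  have fin: "finite ?L"
    by (rule finite_subset[of _ "{..card E}"]) (auto intro: trail_length_le[OF _ f])
  obtain e where e: "e \<in> E" using ne by auto
  have "trail E endp [(e, True)]" using e by (simp add: trail_def)
  then have "?L \<noteq> {}" by blast
  then have "Max ?L \<in> ?L" using fin by (rule Max_in[rotated])
  then obtain t where t: "trail E endp t" and lt: "length t = Max ?L" by auto
  show ?thesis
  proof (rule ccontr)
    assume nc: "\<not> ?thesis"
    define v where "v = arc_head endp (last t)"
    have ne_t: "t \<noteq> []" and adj: "adjl endp t" and dist: "distinct (map fst t)" and sub: "set (map fst t) \<subseteq> E"
      using t by (auto simp: trail_alt)
    have tv: "arc_tail endp (hd t) \<noteq> v" using nc t
      by (auto simp: circuit_def trail_head_def trail_tail_def v_def)
    have eq: "tc endp v t + 1 = hc endp v t" using tc_hc[OF adj ne_t, of v] tv by (simp add: v_def)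
    have "(\<Sum>e\<in>set (map fst t). ev endp v e) = 2 * tc endp v t + 1"
      using tc_plus_hc[OF dist, of endp v] eq by simp
    then have odd1: "odd (\<Sum>e\<in>set (map fst t). ev endp v e)" by simp
    have "deg E endp v = (\<Sum>e\<in>E - set (map fst t). ev endp v e) + (\<Sum>e\<in>set (map fst t). ev endp v e)"
      by (rule trans[OF deg_sum[OF f] sum.subset_diff[OF sub f]])
    moreover have "even (deg E endp v)" using ev by blast
    ultimately have "odd (\<Sum>e\<in>E - set (map fst t). ev endp v e)" using odd1 by presburger
    then have "(\<Sum>e\<in>E - set (map fst t). ev endp v e) \<noteq> 0" by (metis dvd_0_right)
    then obtain e' where e': "e' \<in> E - set (map fst t)" and "ev endp v e' \<noteq> 0"
      by (meson sum.neutral)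
    then obtain i where i: "endp e' i = v" by (auto simp: ev_def split: if_splits)
    have "trail E endp (t @ [(e', i)])"
      using t e' i adjl_append[OF ne_t, of "[(e', i)]" endp]
      by (auto simp: trail_alt arc_tail_def v_def)
    then have "length (t @ [(e', i)]) \<in> ?L" by blast
    then have "length (t @ [(e', i)]) \<le> Max ?L" using fin by (rule Max_ge[rotated])
    then show False using lt by simp
  qed
qed

lemma circuit_tc_hc: "circuit E endp c \<Longrightarrow> tc endp v c = hc endp v c"
  using tc_hc[of endp c v] by (auto simp: circuit_def trail_alt trail_head_def trail_tail_def)

lemma decomp_exists:
  "finite E \<Longrightarrow> \<forall>v. even (deg E endp v) \<Longrightarrow> \<exists>D. circuit_decomposition E endp D"
proof (induction "card E" arbitrary: E rule: less_induct)
  case less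
  show ?case
  proof (cases "E = {}")
    case True
    then show ?thesis by (intro exI[of _ "[]"]) (simp add: cd_alt)
  next
    case False
    obtain c where c: "circuit E endp c" using exists_circuit[OF less.prems(1) False less.prems(2)] by blast
    define E' where "E' = E - set (map fst c)"
    have sub: "set (map fst c) \<subseteq> E" and dist: "distinct (map fst c)" and cne: "c \<noteq> []"
      using c by (auto simp: circuit_def trail_def)
    have fE': "finite E'" using less.prems(1) by (simp add: E'_def)
    have evE': "even (deg E' endp v)" for v
    proof -
      have "deg E endp v = deg E' endp v + (\<Sum>e\<in>set (map fst c). ev endp v e)"
        unfolding deg_sum[OF less.prems(1)] deg_sum[OF fE'] unfolding E'_def by (rule sum.subset_diff[OF sub less.prems(1)])
      moreover have "(\<Sum>e\<in>set (map fst c). ev endp v e) = 2 * tc endp v c"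
        using tc_plus_hc[OF dist] circuit_tc_hc[OF c] by (metis mult_2)
      moreover have "even (deg E endp v)" using less.prems(2) by blast
      ultimately show ?thesis by presburger
    qed
    have "fst (hd c) \<in> set (map fst c)" using cne by simp
    then have "E' \<subset> E" using sub by (auto simp: E'_def)
    then have "card E' < card E" using less.prems(1) by (rule psubset_card_mono[rotated])
    then obtain D where D: "circuit_decomposition E' endp D" using less.hyps fE' evE' by blast
    have D1: "\<forall>c'\<in>set D. circuit E' endp c'" and D2: "distinct (map fst (concat D))"
      and D3: "set (map fst (concat D)) = E'" using D unfolding cd_alt by auto
    have "\<forall>c'\<in>set (c # D). circuit E endp c'"
      using D1 c circuit_mono[of E' endp _ E] by (auto simp: E'_def)
    moreover have "distinct (map fst (concat (c # D)))"
      using D2 D3 dist by (auto simp: E'_def)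
    moreover have "set (map fst (concat (c # D))) = E"
      using D3 sub by (auto simp: E'_def)
    ultimately have "circuit_decomposition E endp (c # D)" unfolding cd_alt by blast
    then show ?thesis by blast
  qed
qed



lemma hits_tail: "circuit E endp c \<Longrightarrow> hits endp c v \<Longrightarrow> \<exists>k<length c. arc_tail endp (c!k) = v"
proof -
  assume c: "circuit E endp c" and h: "hits endp c v"
  then obtain a where a: "a \<in> set c" and av: "arc_tail endp a = v \<or> arc_head endp a = v"
    by (auto simp: hits_def)
  obtain k where k: "k < length c" and ak: "c ! k = a" using a by (meson in_set_conv_nth)
  show ?thesis
  proof (cases "arc_tail endp a = v")
    case True then show ?thesis using k ak by blast
  next
    case False
    then have hv: "arc_head endp a = v" using av by blast
    show ?thesis
    proof (cases "Suc k < length c")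
      case True
      then have "arc_head endp (c!k) = arc_tail endp (c!Suc k)" using c by (auto simp: circuit_def trail_def)
      then show ?thesis using True hv ak by auto
    next
      case False
      then have "c ! k = last c" using k by (metis One_nat_def Suc_lessI last_conv_nth less_nat_zero_code list.size(3) diff_Suc_1)
      then have "arc_tail endp (hd c) = v" using c hv ak by (auto simp: circuit_def trail_head_def trail_tail_def)
      moreover have "c \<noteq> []" using k by auto
      ultimately show ?thesis by (metis hd_conv_nth length_greater_0_conv)
    qed
  qed
qed

lemma mset_trail: "trail E endp t \<Longrightarrow> mset t' = mset t \<Longrightarrow> adjl endp t' \<Longrightarrow> trail E endp t'"
proof -
  assume t: "trail E endp t" and m: "mset t' = mset t" and a: "adjl endp t'"
  have m2: "mset (map fst t') = mset (map fst t)" using m by simp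
  have "t' \<noteq> []" using m t by (auto simp: trail_def)
  moreover have "set (map fst t') = set (map fst t)" using m2 by (metis mset_eq_setD)
  moreover have "distinct (map fst t') = distinct (map fst t)" using m2 by (rule mset_eq_imp_distinct_iff)
  ultimately show ?thesis using t a by (auto simp: trail_alt)
qed

lemma rotate_circ:
  assumes c: "circuit E endp c" and h: "hits endp c v"
  shows "\<exists>c'. circuit E endp c' \<and> mset c' = mset c \<and> trail_tail endp c' = v \<and> trail_head endp c' = v"
proof -
  obtain k where k: "k < length c" and kv: "arc_tail endp (c!k) = v" using hits_tail[OF c h] by blast
  show ?thesis
  proof (cases "k = 0")
    case True
    then show ?thesis using c kv k by (auto simp: circuit_def trail_tail_def hd_conv_nth)
  next
    case False
    let ?xs = "take k c" and ?ys = "drop k c"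
    have ne1: "?xs \<noteq> []" and ne2: "?ys \<noteq> []" using False k by auto
    have tc: "trail E endp c" and cl: "arc_head endp (last c) = arc_tail endp (hd c)"
      using c by (auto simp: circuit_def trail_head_def trail_tail_def)
    have "adjl endp (?xs @ ?ys)" using tc by (simp add: trail_alt)
    then have ax: "adjl endp ?xs" and ay: "adjl endp ?ys" and j: "arc_head endp (last ?xs) = arc_tail endp (hd ?ys)"
      using adjl_append[OF ne1 ne2] by auto
    have lys: "last ?ys = last c" using k by simp
    have hxs: "hd ?xs = hd c" using False by simp
    have hys: "hd ?ys = c ! k" using k by (simp add: hd_drop_conv_nth)
    have "adjl endp (?ys @ ?xs)" using adjl_append[OF ne2 ne1, of endp] ax ay cl lys hxs by simp
    moreover have m: "mset (?ys @ ?xs) = mset c" by (metis append_take_drop_id mset_append add.commute)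
    ultimately have "trail E endp (?ys @ ?xs)" using mset_trail[OF tc] by blast
    moreover have "trail_tail endp (?ys @ ?xs) = v" using ne2 hys kv by (simp add: trail_tail_def)
    moreover have "trail_head endp (?ys @ ?xs) = v" using ne1 j hys kv by (simp add: trail_head_def)
    ultimately show ?thesis using m by (auto simp: circuit_def)
  qed
qed

lemma mset_concat_remove1: "c \<in> set L \<Longrightarrow> mset (concat L) = mset c + mset (concat (remove1 c L))"
  by (induction L) auto

lemma cd_mset: "circuit_decomposition E endp D \<Longrightarrow> mset (concat D') = mset (concat D) \<Longrightarrow>
  \<forall>c\<in>set D'. circuit E endp c \<Longrightarrow> circuit_decomposition E endp D'"
proof -
  assume D: "circuit_decomposition E endp D" and m: "mset (concat D') = mset (concat D)"
    and c: "\<forall>c\<in>set D'. circuit E endp c"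
  have m2: "mset (map fst (concat D')) = mset (map fst (concat D))" using m by simp
  show ?thesis using D c mset_eq_setD[OF m2] mset_eq_imp_distinct_iff[OF m2] unfolding cd_alt by auto
qed

lemma hits_edge: "(e, j) \<in> set c \<Longrightarrow> hits endp c (endp e k)"
  by (cases j; cases k) (force simp: hits_def arc_tail_def arc_head_def)+

lemma merge_step:
  assumes D: "circuit_decomposition E endp D" and c1: "c1 \<in> set D" and c2: "c2 \<in> set D"
    and ne: "c1 \<noteq> c2" and h1: "hits endp c1 v" and h2: "hits endp c2 v"
  shows "\<exists>D'. circuit_decomposition E endp D' \<and> length D' < length D"
proof -
  have cc1: "circuit E endp c1" and cc2: "circuit E endp c2" using D c1 c2 by (auto simp: cd_alt)
  obtain c1' where c1': "circuit E endp c1'" "mset c1' = mset c1" "trail_tail endp c1' = v" "trail_head endp c1' = v"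
    using rotate_circ[OF cc1 h1] by blast
  obtain c2' where c2': "circuit E endp c2'" "mset c2' = mset c2" "trail_tail endp c2' = v" "trail_head endp c2' = v"
    using rotate_circ[OF cc2 h2] by blast
  define R where "R = remove1 c2 (remove1 c1 D)"
  have c2R: "c2 \<in> set (remove1 c1 D)" using c2 ne by (simp add: in_set_remove1)
  define D' where "D' = (c1' @ c2') # R"
  have m: "mset (concat D') = mset (concat D)"
    unfolding D'_def R_def using mset_concat_remove1[OF c1, symmetric] mset_concat_remove1[OF c2R, symmetric] c1'(2) c2'(2)
    by (simp add: add.assoc)
  have "distinct (map fst (concat D'))"
    using m D unfolding cd_alt by (metis mset_eq_imp_distinct_iff mset_map)
  then have dist: "distinct (map fst (c1' @ c2'))" unfolding D'_def by auto
  have t1: "trail E endp c1'" and t2: "trail E endp c2'" using c1' c2' by (auto simp: circuit_def)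
  have n1: "c1' \<noteq> []" and n2: "c2' \<noteq> []" using t1 t2 by (auto simp: trail_def)
  have "adjl endp (c1' @ c2')" using adjl_append[OF n1 n2, of endp] t1 t2 c1'(4) c2'(3)
    by (auto simp: trail_alt trail_head_def trail_tail_def)
  then have "trail E endp (c1' @ c2')" using t1 t2 dist n1 by (auto simp: trail_alt)
  moreover have "trail_head endp (c1' @ c2') = trail_tail endp (c1' @ c2')"
    using n1 n2 c1'(3) c2'(4) by (simp add: trail_head_def trail_tail_def)
  ultimately have cm: "circuit E endp (c1' @ c2')" by (simp add: circuit_def)
  have "\<forall>c\<in>set R. circuit E endp c" using D unfolding R_def cd_alt
    by (meson notin_set_remove1)
  then have "circuit_decomposition E endp D'" using cd_mset[OF D m] cm by (simp add: D'_def)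
  moreover have "length D' < length D"
    using c1 c2R by (simp add: D'_def R_def length_remove1) (metis One_nat_def Suc_pred length_pos_if_in_set diff_less zero_less_Suc diff_Suc_eq_diff_pred length_remove1 c2R)
  ultimately show ?thesis by blast
qed



lemma all_hit:
  assumes eu: "eulerian V E endp" and bV: "b \<in> V"
  shows "circuit_decomposition E endp D \<Longrightarrow> \<exists>D'. circuit_decomposition E endp D' \<and> (\<forall>c\<in>set D'. hits endp c b)"
proof (induction "length D" arbitrary: D rule: less_induct)
  case less
  show ?case
  proof (cases "\<forall>c\<in>set D. hits endp c b")
    case True then show ?thesis using less.prems by blast
  next
    case False
    then obtain c0 where c0: "c0 \<in> set D" and nh: "\<not> hits endp c0 b" by blast
    have "\<exists>c1 c2 v. c1 \<in> set D \<and> c2 \<in> set D \<and> c1 \<noteq> c2 \<and> hits endp c1 v \<and> hits endp c2 v"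
    proof (rule ccontr)
      assume np: "\<not> ?thesis"
      define S where "S = {v. v = b \<or> (\<exists>c\<in>set D. hits endp c b \<and> hits endp c v)}"
      define R where "R = ({(endp e True, endp e False) | e. e \<in> E} \<union> {(endp e False, endp e True) | e. e \<in> E})"
      have Eset: "set (map fst (concat D)) = E" using less.prems by (simp add: cd_alt)
      have stepS: "z \<in> S" if yzR: "(y, z) \<in> R" and yS: "y \<in> S" for y z
      proof -
        obtain e i where e: "e \<in> E" and yz: "y = endp e i" "z = endp e (\<not> i)"
        proof -
          have "(\<exists>e\<in>E. y = endp e True \<and> z = endp e False) \<or> (\<exists>e\<in>E. y = endp e False \<and> z = endp e True)"
            using yzR unfolding R_def by blast
          then show ?thesis by (metis (full_types) \<open>\<And>e i. \<lbrakk>e \<in> E; y = endp e i; z = endp e (\<not> i)\<rbrakk> \<Longrightarrow> thesis\<close>)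
        qed
        obtain c j where c: "c \<in> set D" and ej: "(e, j) \<in> set c" using e Eset by auto
        have hy: "hits endp c y" and hz: "hits endp c z" using hits_edge[OF ej] yz by auto
        have "hits endp c b"
        proof (cases "y = b")
          case True then show ?thesis using hy by simp
        next
          case False
          then obtain c' where "c' \<in> set D" "hits endp c' b" "hits endp c' y" using yS by (auto simp: S_def)
          then show ?thesis using np c hy by blast
        qed
        then show ?thesis using c hz by (auto simp: S_def)
      qed
      have allS: "v \<in> S" if "v \<in> V" for v
      proof -
        have "(b, v) \<in> R\<^sup>*" using eu bV that by (auto simp: eulerian_def connected_graph_def R_def)
        then show ?thesis
        proof (induction rule: rtrancl_induct)
          case base then show ?case by (simp add: S_def)
        next
          case (step y z) then show ?case using stepS by blast
        qed
      qed
      have cc0: "circuit E endp c0" using c0 less.prems by (auto simp: cd_alt)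
      then have "c0 \<noteq> []" by (auto simp: circuit_def trail_def)
      then have hd0: "hd c0 \<in> set c0" by simp
      then have "fst (hd c0) \<in> E" using cc0 by (auto simp: circuit_def trail_def)
      then have uV: "arc_tail endp (hd c0) \<in> V" using eu by (auto simp: eulerian_def graph_def arc_tail_def)
      have hu: "hits endp c0 (arc_tail endp (hd c0))" using hd0 by (auto simp: hits_def)
      have "arc_tail endp (hd c0) \<in> S" using allS[OF uV] .
      then show False unfolding S_def using hu nh np c0 by blast
    qed
    then obtain c1 c2 v where "c1 \<in> set D" "c2 \<in> set D" "c1 \<noteq> c2" "hits endp c1 v" "hits endp c2 v" by blast
    then obtain D' where "circuit_decomposition E endp D'" "length D' < length D"
      using merge_step[OF less.prems] by blast
    then show ?thesis using less.hyps by blast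
  qed
qed

definition cl :: "'e set \<Rightarrow> ('e \<Rightarrow> bool \<Rightarrow> 'v) \<Rightarrow> 'v \<Rightarrow> 'e arc list \<Rightarrow> bool" where
  "cl E endp b t \<longleftrightarrow> trail E endp t \<and> trail_tail endp t = b \<and> trail_head endp t = b"

lemma split_cl:
  "cl E endp b t \<Longrightarrow> \<exists>P. (\<forall>p\<in>set P. cl E endp b p) \<and> concat P = t \<and> length P = tc endp b t"
proof (induction "length t" arbitrary: t rule: less_induct)
  case less
  have t: "trail E endp t" and tt: "trail_tail endp t = b" and th: "trail_head endp t = b"
    using less.prems by (auto simp: cl_def)
  have tne: "t \<noteq> []" and ta: "adjl endp t" and tsub: "set (map fst t) \<subseteq> E" and tdist: "distinct (map fst t)"
    using t by (auto simp: trail_alt)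
  show ?case
  proof (cases "\<exists>k. 0 < k \<and> k < length t \<and> arc_tail endp (t!k) = b")
    case True
    then obtain k where k0: "0 < k" and kl: "k < length t" and kb: "arc_tail endp (t!k) = b" by blast
    let ?xs = "take k t" and ?ys = "drop k t"
    have ne1: "?xs \<noteq> []" and ne2: "?ys \<noteq> []" using k0 kl by auto
    have "adjl endp (?xs @ ?ys)" using ta by simp
    then have ax: "adjl endp ?xs" and ay: "adjl endp ?ys" and j: "arc_head endp (last ?xs) = arc_tail endp (hd ?ys)"
      using adjl_append[OF ne1 ne2, of endp] by auto
    have hys: "hd ?ys = t ! k" using kl by (simp add: hd_drop_conv_nth)
    have s1: "set (map fst ?xs) \<subseteq> E" using tsub by (metis take_map set_take_subset order_trans)
    have d1: "distinct (map fst ?xs)" using tdist by (metis take_map distinct_take)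
    have tr1: "trail E endp ?xs" using ne1 ax s1 d1 by (simp add: trail_alt)
    have s2: "set (map fst ?ys) \<subseteq> E" using tsub by (metis drop_map set_drop_subset order_trans)
    have d2: "distinct (map fst ?ys)" using tdist by (metis drop_map distinct_drop)
    have tr2: "trail E endp ?ys" using ne2 ay s2 d2 by (simp add: trail_alt)
    from tr1 tr2 have c1: "cl E endp b ?xs" and c2: "cl E endp b ?ys"
      using tt th j hys kb k0 kl by (auto simp: cl_def trail_tail_def trail_head_def)
    have lt1: "length ?xs < length t" and lt2: "length ?ys < length t" using k0 kl by auto
    obtain P1 where P1: "\<forall>p\<in>set P1. cl E endp b p" "concat P1 = ?xs" "length P1 = tc endp b ?xs"
      using less.hyps[OF lt1 c1] by blast
    obtain P2 where P2: "\<forall>p\<in>set P2. cl E endp b p" "concat P2 = ?ys" "length P2 = tc endp b ?ys"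
      using less.hyps[OF lt2 c2] by blast
    have "tc endp b t = tc endp b ?xs + tc endp b ?ys" by (metis append_take_drop_id tc_append)
    then show ?thesis using P1 P2 by (intro exI[of _ "P1 @ P2"]) auto
  next
    case False
    obtain a r where ar: "t = a # r" using tne by (cases t) auto
    have "\<forall>x\<in>set r. arc_tail endp x \<noteq> b"
    proof
      fix x assume "x \<in> set r"
      then obtain j where "j < length r" "r ! j = x" by (meson in_set_conv_nth)
      then show "arc_tail endp x \<noteq> b" using False ar by (metis Suc_mono length_Cons nth_Cons_Suc zero_less_Suc)
    qed
    then have "tc endp b r = 0" unfolding tc_def by (induction r) auto
    then have "tc endp b t = 1" using tt ar by (simp add: trail_tail_def)
    then show ?thesis using less.prems by (intro exI[of _ "[t]"]) auto
  qed
qed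



lemma sum_list_mset: "mset xs = mset ys \<Longrightarrow> sum_list (map (f :: 'a \<Rightarrow> 'b::comm_monoid_add) xs) = sum_list (map f ys)"
proof -
  assume m: "mset xs = mset ys"
  have "sum_list (map f xs) = sum_mset (mset (map f xs))" by (rule sum_mset_sum_list[symmetric])
  also have "\<dots> = sum_mset (mset (map f ys))" using m by simp
  also have "\<dots> = sum_list (map f ys)" by (rule sum_mset_sum_list)
  finally show ?thesis .
qed

lemma weight_append[simp]: "weight \<gamma> (xs @ ys) = weight \<gamma> xs + weight \<gamma> ys"
  by (simp add: weight_def)

lemma weight_concat: "weight \<gamma> (concat P) = sum_list (map (weight \<gamma>) P)"
  by (induction P) (auto simp: weight_def)

lemma weight_mset: "mset xs = mset ys \<Longrightarrow> weight \<gamma> xs = weight \<gamma> ys"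
  unfolding weight_def by (rule sum_list_mset)

lemma tc_mset: "mset xs = mset ys \<Longrightarrow> tc endp v xs = tc endp v ys"
  unfolding tc_def by (rule sum_list_mset)

lemma num_nonzero_append[simp]: "num_nonzero \<gamma> (xs @ ys) = num_nonzero \<gamma> xs + num_nonzero \<gamma> ys"
  by (simp add: num_nonzero_def)
lemma num_nonzero_Cons[simp]: "num_nonzero \<gamma> (x # ys) = (if nonzero \<gamma> x then 1 else 0) + num_nonzero \<gamma> ys"
  by (simp add: num_nonzero_def)
lemma num_nonzero_Nil[simp]: "num_nonzero \<gamma> [] = 0"
  by (simp add: num_nonzero_def)

lemma nz_sum: "sum_list (map (weight \<gamma>) P) \<noteq> 0 \<Longrightarrow> 1 \<le> num_nonzero \<gamma> P"
  by (induction P) (auto simp: nonzero_def)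

lemma cl_circuit: "cl E endp b p \<Longrightarrow> circuit E endp p"
  by (simp add: cl_def circuit_def)

lemma flood_from:
  "\<forall>c\<in>set D. circuit E endp c \<and> hits endp c b \<Longrightarrow>
   \<exists>F. (\<forall>p\<in>set F. cl E endp b p) \<and> mset (concat F) = mset (concat D) \<and>
       length F = tc endp b (concat D) \<and> num_nonzero \<gamma> D \<le> num_nonzero \<gamma> F"
proof (induction D)
  case Nil then show ?case by (intro exI[of _ "[]"]) auto
next
  case (Cons c D)
  obtain F' where F': "\<forall>p\<in>set F'. cl E endp b p" "mset (concat F') = mset (concat D)"
      "length F' = tc endp b (concat D)" "num_nonzero \<gamma> D \<le> num_nonzero \<gamma> F'"
    using Cons.IH Cons.prems by (meson list.set_intros(2))
  have cc: "circuit E endp c" and hc: "hits endp c b" using Cons.prems by auto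
  obtain c' where c': "circuit E endp c'" "mset c' = mset c" "trail_tail endp c' = b" "trail_head endp c' = b"
    using rotate_circ[OF cc hc] by blast
  have "cl E endp b c'" using c' by (auto simp: cl_def circuit_def)
  then have "\<exists>P. (\<forall>p\<in>set P. cl E endp b p) \<and> concat P = c' \<and> length P = tc endp b c'"
    by (rule split_cl)
  then obtain P where P: "\<forall>p\<in>set P. cl E endp b p" "concat P = c'" "length P = tc endp b c'"
    by blast
  have nn: "(if nonzero \<gamma> c then 1 else 0) \<le> num_nonzero \<gamma> P"
  proof (cases "nonzero \<gamma> c")
    case True
    then have "weight \<gamma> c' \<noteq> 0" using weight_mset[OF c'(2), of \<gamma>] by (simp add: nonzero_def)
    then have "sum_list (map (weight \<gamma>) P) \<noteq> 0" using P(2) weight_concat[of \<gamma> P] by simp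
    then show ?thesis using nz_sum[of \<gamma> P] True by simp
  qed simp
  show ?case
  proof (intro exI[of _ "P @ F'"] conjI)
    show "\<forall>p\<in>set (P @ F'). cl E endp b p" using P F' by auto
    show "mset (concat (P @ F')) = mset (concat (c # D))" using P(2) c'(2) F'(2) by simp
    show "length (P @ F') = tc endp b (concat (c # D))" using P(3) F'(3) tc_mset[OF c'(2)] by simp
    show "num_nonzero \<gamma> (c # D) \<le> num_nonzero \<gamma> (P @ F')" using nn F'(4) by simp
  qed
qed

lemma tc_eq_hc_concat: "\<forall>c\<in>set D. circuit E endp c \<Longrightarrow> tc endp v (concat D) = hc endp v (concat D)"
  by (induction D) (auto simp: circuit_tc_hc)

lemma flooding_of:
  assumes eu: "eulerian V E endp" and D: "circuit_decomposition E endp D" and h: "\<forall>c\<in>set D. hits endp c b"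
  shows "\<exists>F. flooding E endp b F \<and> num_nonzero \<gamma> D \<le> num_nonzero \<gamma> F"
proof -
  have fE: "finite E" using eu by (simp add: eulerian_def graph_def)
  have cD: "\<forall>c\<in>set D. circuit E endp c" and dD: "distinct (map fst (concat D))"
    and sD: "set (map fst (concat D)) = E" using D by (auto simp: cd_alt)
  obtain F where F: "\<forall>p\<in>set F. cl E endp b p" "mset (concat F) = mset (concat D)"
       "length F = tc endp b (concat D)" "num_nonzero \<gamma> D \<le> num_nonzero \<gamma> F"
    using flood_from[of D E endp b \<gamma>] cD h by blast
  have "tc endp b (concat D) + hc endp b (concat D) = (\<Sum>e\<in>set (map fst (concat D)). ev endp b e)"
    by (rule tc_plus_hc[OF dD])
  also have "\<dots> = deg E endp b" unfolding sD by (rule deg_sum[OF fE, symmetric])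
  finally have "tc endp b (concat D) + hc endp b (concat D) = deg E endp b" .
  then have "length F = deg E endp b div 2" using F(3) tc_eq_hc_concat[OF cD] by simp
  moreover have "\<forall>c\<in>set F. circuit E endp c"
  proof
    fix c assume "c \<in> set F"
    then have "cl E endp b c" using F(1) by blast
    then show "circuit E endp c" by (rule cl_circuit)
  qed
  then have "circuit_decomposition E endp F" by (rule cd_mset[OF D F(2)])
  ultimately have "flooding E endp b F" using F(1) by (auto simp: flooding_def cl_def)
  then show ?thesis using F(4) by blast
qed

lemma cl_append: "cl E endp b p \<Longrightarrow> cl E endp b q \<Longrightarrow> distinct (map fst (p @ q)) \<Longrightarrow> cl E endp b (p @ q)"
proof -
  assume p: "cl E endp b p" and q: "cl E endp b q" and d: "distinct (map fst (p @ q))"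
  have n1: "p \<noteq> []" and n2: "q \<noteq> []" using p q by (auto simp: cl_def trail_def)
  have "adjl endp (p @ q)" using adjl_append[OF n1 n2, of endp] p q
    by (auto simp: cl_def trail_alt trail_head_def trail_tail_def)
  then show ?thesis using p q d n1 n2 by (auto simp: cl_def trail_alt trail_head_def trail_tail_def)
qed

lemma cl_concat: "\<forall>p\<in>set L. cl E endp b p \<Longrightarrow> distinct (map fst (concat L)) \<Longrightarrow>
   concat L = [] \<or> cl E endp b (concat L)"
proof (induction L)
  case (Cons p L)
  then have "concat L = [] \<or> cl E endp b (concat L)" by auto
  moreover have "cl E endp b p" using Cons.prems by simp
  moreover have "distinct (map fst (p @ concat L))" using Cons.prems by simp
  ultimately show ?case using cl_append[of E endp b p "concat L"] by (metis append_Nil2 concat.simps(2))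
qed simp

lemma mset_filter_concat:
  "mset (concat (filter P L)) + mset (concat (filter (\<lambda>x. \<not> P x) L)) = mset (concat L)"
  by (induction L) (auto simp: add_ac)

lemma merge_flooding:
  assumes F: "flooding E endp b F" and pos: "0 < num_nonzero \<gamma> F"
  shows "\<exists>D. good_decomposition E endp \<gamma> b D \<and> length D = num_nonzero \<gamma> F"
proof -
  have FD: "circuit_decomposition E endp F" and Fc: "\<forall>p\<in>set F. cl E endp b p"
    using F by (auto simp: flooding_def cl_def circuit_decomposition_def circuit_def)
  define Z where "Z = concat (filter (\<lambda>c. \<not> nonzero \<gamma> c) F)"
  obtain n rest where N: "filter (nonzero \<gamma>) F = n # rest"
    using pos by (cases "filter (nonzero \<gamma>) F") (auto simp: num_nonzero_def)
  define D where "D = (Z @ n) # rest"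
  have m: "mset (concat D) = mset (concat F)"
    using mset_filter_concat[of "nonzero \<gamma>" F] N by (simp add: D_def Z_def add_ac)
  have "distinct (map fst (concat D))" using m FD unfolding cd_alt by (metis mset_eq_imp_distinct_iff mset_map)
  then have dZn: "distinct (map fst (Z @ n))" by (auto simp: D_def)
  have nset: "n \<in> set F" "nonzero \<gamma> n" and rset: "\<forall>r\<in>set rest. r \<in> set F \<and> nonzero \<gamma> r"
  proof -
    have "set (n # rest) = {x\<in>set F. nonzero \<gamma> x}" by (metis N set_filter)
    then show "n \<in> set F" "nonzero \<gamma> n" "\<forall>r\<in>set rest. r \<in> set F \<and> nonzero \<gamma> r" by auto
  qed
  have cln: "cl E endp b n" using Fc nset by blast
  have "Z = [] \<or> cl E endp b Z" unfolding Z_def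
    using cl_concat[of "filter (\<lambda>c. \<not> nonzero \<gamma> c) F" E endp b] Fc dZn by (auto simp: Z_def)
  then have clZn: "cl E endp b (Z @ n)" using cln cl_append[of E endp b Z n] dZn by auto
  have "weight \<gamma> Z = 0" unfolding Z_def weight_concat
    by (induction F) (auto simp: nonzero_def)
  then have nzZn: "nonzero \<gamma> (Z @ n)" using nset by (simp add: nonzero_def)
  have hit: "cl E endp b p \<Longrightarrow> hits endp p b" for p
    by (cases p) (auto simp: cl_def hits_def trail_tail_def trail_def)
  have "\<forall>c\<in>set D. circuit E endp c" using clZn rset Fc by (auto simp: D_def intro!: cl_circuit)
  then have "circuit_decomposition E endp D" using cd_mset[OF FD m] by blast
  moreover have "\<forall>c\<in>set D. nonzero \<gamma> c \<and> hits endp c b" using clZn nzZn rset Fc hit by (auto simp: D_def)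
  moreover have "length D = num_nonzero \<gamma> F" using N by (simp add: D_def num_nonzero_def)
  ultimately show ?thesis by (auto simp: good_decomposition_def)
qed

lemma good_length: "good_decomposition E endp \<gamma> b D \<Longrightarrow> length D \<le> card E"
proof -
  assume g: "good_decomposition E endp \<gamma> b D"
  then have cD: "\<forall>c\<in>set D. c \<noteq> []" and d: "distinct (map fst (concat D))" and s: "set (map fst (concat D)) = E"
    by (auto simp: good_decomposition_def cd_alt circuit_def trail_def)
  have "length D \<le> length (concat D)" using cD
  proof (induction D)
    case (Cons c D)
    then show ?case by (cases c) auto
  qed simp
  also have "\<dots> = card E" using d s by (metis distinct_card length_map)
  finally show ?thesis .
qed



lemma num_nonzero_all: "\<forall>c\<in>set D. nonzero \<gamma> c \<Longrightarrow> num_nonzero \<gamma> D = length D"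
  by (simp add: num_nonzero_def)

theorem mainTheorem3:
  fixes V :: "'v set" and E :: "'e set" and endp :: "'e \<Rightarrow> bool \<Rightarrow> 'v"
    and \<gamma> :: "'e \<Rightarrow> bit" and b :: 'v
  assumes "res_graph V E endp \<gamma> b"
  shows "(\<exists>F. flooding E endp b F \<and> num_nonzero \<gamma> F = flooding_number E endp \<gamma> b) \<and>
         (\<forall>F. flooding E endp b F \<longrightarrow> num_nonzero \<gamma> F \<le> flooding_number E endp \<gamma> b)"
proof -
  have eu: "eulerian V E endp" and bV: "b \<in> V" using assms by (auto simp: res_graph_def)
  have fE: "finite E" and gr: "\<forall>e\<in>E. \<forall>i. endp e i \<in> V" and evV: "\<forall>v\<in>V. even (deg E endp v)"
    using eu by (auto simp: eulerian_def graph_def)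
  have evall: "\<forall>v. even (deg E endp v)"
  proof
    fix v show "even (deg E endp v)"
    proof (cases "v \<in> V")
      case True then show ?thesis using evV by blast
    next
      case False
      then have "\<forall>e\<in>E. ev endp v e = 0" using gr by (auto simp: ev_def)
      then have "deg E endp v = 0" unfolding deg_sum[OF fE] by simp
      then show ?thesis by simp
    qed
  qed
  obtain D0 where D0: "circuit_decomposition E endp D0" using decomp_exists[OF fE evall] by blast
  obtain D1 where D1: "circuit_decomposition E endp D1" "\<forall>c\<in>set D1. hits endp c b"
    using all_hit[OF eu bV D0] by blast
  let ?S = "{length D | D. good_decomposition E endp \<gamma> b D}"
  have finS: "finite ?S"
    by (rule finite_subset[of _ "{..card E}"]) (auto dest: good_length)
  have part2: "\<forall>F. flooding E endp b F \<longrightarrow> num_nonzero \<gamma> F \<le> flooding_number E endp \<gamma> b"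
  proof (intro allI impI)
    fix F assume fl: "flooding E endp b F"
    show "num_nonzero \<gamma> F \<le> flooding_number E endp \<gamma> b"
    proof (cases "num_nonzero \<gamma> F = 0")
      case True then show ?thesis by simp
    next
      case False
      then obtain D where D: "good_decomposition E endp \<gamma> b D" "length D = num_nonzero \<gamma> F"
        using merge_flooding[OF fl] by blast
      then have "num_nonzero \<gamma> F \<in> ?S" by (metis (mono_tags, lifting) mem_Collect_eq)
      then have "num_nonzero \<gamma> F \<le> Max ?S" using finS by (simp add: Max_ge)
      then show ?thesis using D by (auto simp: flooding_number_def)
    qed
  qed
  have part1: "\<exists>F. flooding E endp b F \<and> num_nonzero \<gamma> F = flooding_number E endp \<gamma> b"
  proof (cases "\<exists>D. good_decomposition E endp \<gamma> b D")
    case True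
    then have "?S \<noteq> {}" by blast
    then have "Max ?S \<in> ?S" by (rule Max_in[OF finS])
    then obtain D where D: "good_decomposition E endp \<gamma> b D" "length D = Max ?S" by auto
    have fn: "flooding_number E endp \<gamma> b = length D" using True D by (simp add: flooding_number_def)
    have Dd: "circuit_decomposition E endp D" and Dh: "\<forall>c\<in>set D. hits endp c b"
      and Dn: "\<forall>c\<in>set D. nonzero \<gamma> c" using D(1) by (auto simp: good_decomposition_def)
    obtain F where F: "flooding E endp b F" "num_nonzero \<gamma> D \<le> num_nonzero \<gamma> F"
      using flooding_of[OF eu Dd Dh] by blast
    have "length D \<le> num_nonzero \<gamma> F" using F(2) num_nonzero_all[OF Dn] by simp
    moreover have "num_nonzero \<gamma> F \<le> length D" using part2 F(1) fn by metis
    ultimately show ?thesis using F(1) fn by (intro exI[of _ F]) simp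
  next
    case False
    then have fn: "flooding_number E endp \<gamma> b = 0" by (simp add: flooding_number_def)
    obtain F where F: "flooding E endp b F" using flooding_of[OF eu D1] by blast
    then have "num_nonzero \<gamma> F = 0" using part2 fn by fastforce
    then show ?thesis using F fn by auto
  qed
  show ?thesis using part1 part2 by blast
qed

end
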